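(* Let $B\in\mathbb{R}^{k\times k}$ be symmetric positive definite, $D\in\mathbb{R}^{m\times k}$ of full row rank, $A\in\mathbb{R}^{k\times k}$, $C:\mathbb{R}^k\to\mathbb{R}^{k\times k}$, $\Pi=I-B^{-1}D^T(DB^{-1}D^T)^{-1}D$. Let $h>0$, $y_n\in\mathbb{R}^k$ with $Dy_n=0$, and real coefficients $a_{i,j}$ ($i=1,\dots,s+1$, $j\le i$, with $a_{s+1,s+1}=0$) and $\alpha^k_{i,\gamma}$ ($\gamma=1,\dots,J$). Suppose $Y_1,\dots,Y_{s+1}\in\mathbb{R}^k$ satisfy, for $i=1,\dots,s+1$, $$Y_i=\varphi_i y_n+h\sum_{j=1}^{i-1}a_{i,j}\,\varphi_i\varphi_j^{-1}\,\Pi B^{-1}AY_j+h\,a_{i,i}\,\Pi B^{-1}AY_i,$$ where $Y_i^\gamma:=\sum_k\alpha^k_{i,\gamma}Y_k$ and $\varphi_i:=\exp\!\big(h\Pi B^{-1}C(Y_i^J)\big)\cdots\exp\!\big(h\Pi B^{-1}C(Y_i^1)\big)$ (matrix exponentials). Then $DY_i=0$ for all $i$, and in particular $y_{n+1}:=Y_{s+1}$ satisfies $Dy_{n+1}=0$.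
   Context: This is a DIRK-CF method (a diagonally implicit Runge–Kutta method for the diffusion combined with a commutator-free exponential integrator for the convection, the exponentials being products of exponentials of linear combinations of stage convection operators) applied to the projected semi-discrete Navier–Stokes ODE $\dot y=\Pi B^{-1}Ay+\Pi B^{-1}C(y)y$. *)

theory Defs
  imports "HOL-Analysis.Analysis"
begin

definition mexp :: "real^'n^'n \<Rightarrow> real^'n^'n" where
  "mexp M = (\<Sum>n. (1 / fact n) *\<^sub>R (((\<lambda>X. M ** X) ^^ n) (mat 1)))"

definition proj_Pi :: "real^'k^'k \<Rightarrow> real^'k^'m \<Rightarrow> real^'k^'k" where
  "proj_Pi B D = mat 1 - matrix_inv B ** transpose D ** matrix_inv (D ** matrix_inv B ** transpose D) ** D"

text \<open>Commutator-free product
  \<open>exp(h \<Pi> B^{-1} C(Z_J)) \<cdots> exp(h \<Pi> B^{-1} C(Z_1))\<close>, where \<open>PB = \<Pi> B^{-1}\<close>.\<close>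
definition cf_phi :: "real \<Rightarrow> real^'k^'k \<Rightarrow> (real^'k \<Rightarrow> real^'k^'k) \<Rightarrow> (nat \<Rightarrow> real^'k) \<Rightarrow> nat \<Rightarrow> real^'k^'k" where
  "cf_phi h PB C Z J = foldl (\<lambda>M g. mexp (h *\<^sub>R (PB ** C (Z g))) ** M) (mat 1) [1..<J+1]"

end

theory Submission imports Defs begin

typedef (overloaded) ('n::finite) sq = "UNIV :: ((real^'n) \<Rightarrow>\<^sub>L (real^'n)) set" by simp
setup_lifting type_definition_sq

instantiation sq :: (finite) real_normed_algebra_1
begin
lift_definition zero_sq :: "'a sq" is 0 .
lift_definition one_sq :: "'a sq" is id_blinfun .
lift_definition plus_sq :: "'a sq \<Rightarrow> 'a sq \<Rightarrow> 'a sq" is "(+)" .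
lift_definition minus_sq :: "'a sq \<Rightarrow> 'a sq \<Rightarrow> 'a sq" is "(-)" .
lift_definition uminus_sq :: "'a sq \<Rightarrow> 'a sq" is "uminus" .
lift_definition times_sq :: "'a sq \<Rightarrow> 'a sq \<Rightarrow> 'a sq" is "(o\<^sub>L)" .
lift_definition scaleR_sq :: "real \<Rightarrow> 'a sq \<Rightarrow> 'a sq" is "scaleR" .
lift_definition norm_sq :: "'a sq \<Rightarrow> real" is norm .
lift_definition dist_sq :: "'a sq \<Rightarrow> 'a sq \<Rightarrow> real" is dist .
lift_definition sgn_sq :: "'a sq \<Rightarrow> 'a sq" is "\<lambda>x. x /\<^sub>R norm x" .
definition uniformity_sq :: "('a sq \<times> 'a sq) filter" where
  "uniformity_sq = (INF e\<in>{0 <..}. principal {(x, y). dist x y < e})"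
definition open_sq :: "'a sq set \<Rightarrow> bool" where
  "open_sq U = (\<forall>x\<in>U. \<forall>\<^sub>F (x', y) in uniformity. x' = x \<longrightarrow> y \<in> U)"
instance
proof
  fix x y z :: "'a sq" and a b :: real
  show "x + y + z = x + (y + z)" by transfer simp
  show "x + y = y + x" by transfer simp
  show "0 + x = x" by transfer simp
  show "- x + x = 0" by transfer simp
  show "x - y = x + - y" by transfer simp
  show "a *\<^sub>R (x + y) = a *\<^sub>R x + a *\<^sub>R y" by transfer (simp add: scaleR_add_right)
  show "(a + b) *\<^sub>R x = a *\<^sub>R x + b *\<^sub>R x" by transfer (simp add: scaleR_add_left)
  show "a *\<^sub>R b *\<^sub>R x = (a * b) *\<^sub>R x" by transfer simp
  show "1 *\<^sub>R x = x" by transfer simp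
  show "x * y * z = x * (y * z)" by transfer (auto intro!: blinfun_eqI simp: blinfun.bilinear_simps)
  show "1 * x = x" by transfer (auto intro!: blinfun_eqI)
  show "x * 1 = x" by transfer (auto intro!: blinfun_eqI)
  show "(x + y) * z = x * z + y * z" by transfer (auto intro!: blinfun_eqI simp: blinfun.bilinear_simps)
  show "x * (y + z) = x * y + x * z" by transfer (auto intro!: blinfun_eqI simp: blinfun.bilinear_simps)
  show "(0::'a sq) \<noteq> 1" apply transfer
    by (metis blinfun_apply_id_blinfun id_apply norm_blinfun_id norm_zero zero_neq_one)
  show "a *\<^sub>R x * y = a *\<^sub>R (x * y)" by transfer (auto intro!: blinfun_eqI simp: blinfun.bilinear_simps blinfun.scaleR_right)
  show "x * a *\<^sub>R y = a *\<^sub>R (x * y)" by transfer (auto intro!: blinfun_eqI simp: blinfun.bilinear_simps blinfun.scaleR_right)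
  show "dist x y = norm (x - y)" by transfer (simp add: dist_norm)
  show "norm (x + y) \<le> norm x + norm y" by transfer (rule norm_triangle_ineq)
  show "norm (a *\<^sub>R x) = \<bar>a\<bar> * norm x" by transfer simp
  show "(norm x = 0) = (x = 0)" by transfer simp
  show "sgn x = inverse (norm x) *\<^sub>R x" by transfer simp
  show "norm (x * y) \<le> norm x * norm y" by transfer (rule norm_blinfun_compose)
  show "norm (1::'a sq) = 1" by transfer simp
qed (simp_all add: uniformity_sq_def open_sq_def)
end

lemma dist_sq_Rep: "dist x y = dist (Rep_sq x) (Rep_sq y)"
  by transfer simp

instance sq :: (finite) banach
proof
  fix X :: "nat \<Rightarrow> 'a sq"
  assume "Cauchy X"
  then have "Cauchy (\<lambda>n. Rep_sq (X n))"
    unfolding Cauchy_def dist_sq_Rep by simp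
  then obtain L where L: "(\<lambda>n. Rep_sq (X n)) \<longlonglongrightarrow> L"
    using convergent_def complete_UNIV convergent_eq_Cauchy by blast
  have "X \<longlonglongrightarrow> Abs_sq L"
    using L unfolding tendsto_iff dist_sq_Rep by (simp add: Abs_sq_inverse)
  then show "convergent X" by (auto simp: convergent_def)
qed

definition G :: "'n::finite sq \<Rightarrow> real^'n^'n" where
  "G x = matrix (blinfun_apply (Rep_sq x))"
definition F :: "real^'n^'n \<Rightarrow> 'n::finite sq" where
  "F M = Abs_sq (Blinfun ((*v) M))"

lemma bl_mv: "bounded_linear ((*v) (M::real^'n^'m))"
  by (simp add: linear_conv_bounded_linear)

lemma G_F: "G (F M) = M"
  by (simp add: G_def F_def Abs_sq_inverse bounded_linear_Blinfun_apply[OF bl_mv])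

lemma G_mult: "G (x * y) = G x ** G y"
proof -
  have "blinfun_apply (Rep_sq (x*y)) = blinfun_apply (Rep_sq x) o blinfun_apply (Rep_sq y)"
    by (simp add: times_sq.rep_eq fun_eq_iff)
  then show ?thesis unfolding G_def
    by (simp add: matrix_compose bounded_linear.linear[OF blinfun.bounded_linear_right])
qed

lemma G_one: "G 1 = mat 1"
proof -
  have "blinfun_apply (Rep_sq 1) = id" by (simp add: one_sq.rep_eq fun_eq_iff)
  then show ?thesis unfolding G_def by (metis matrix_id_mat_1)
qed

lemma F_uminus: "F (- M) = - F M"
proof -
  have "Blinfun ((*v) (-M)) = - Blinfun ((*v) M)"
    by (rule blinfun_eqI) (simp add: blinfun.minus_left bounded_linear_Blinfun_apply[OF bl_mv] matrix_vector_mult_def vec_eq_iff sum_negf)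
  then show ?thesis unfolding F_def
    by (metis Abs_sq_inverse UNIV_I uminus_sq.abs_eq)
qed

lemma G_bl: "bounded_linear (G :: 'n::finite sq \<Rightarrow> real^'n^'n)"
proof (rule bounded_linear_intro[where K="real CARD('n) * real CARD('n)"])
  fix x y :: "'n sq" and r :: real
  show "G (x + y) = G x + G y"
    by (simp add: G_def matrix_def plus_sq.rep_eq vec_eq_iff blinfun.bilinear_simps)
  show "G (r *\<^sub>R x) = r *\<^sub>R G x"
    by (simp add: G_def matrix_def scaleR_sq.rep_eq vec_eq_iff blinfun.bilinear_simps)
  have c: "\<bar>G x $ i $ j\<bar> \<le> norm x" for i j
  proof -
    have "\<bar>G x $ i $ j\<bar> = \<bar>blinfun_apply (Rep_sq x) (axis j 1) $ i\<bar>"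
      by (simp add: G_def matrix_def)
    also have "\<dots> \<le> norm (blinfun_apply (Rep_sq x) (axis j 1))" by (rule component_le_norm_cart)
    also have "\<dots> \<le> norm (Rep_sq x) * norm (axis j (1::real))" by (rule norm_blinfun)
    also have "\<dots> = norm x" by (simp add: norm_sq.rep_eq)
    finally show ?thesis .
  qed
  have "norm (G x) \<le> (\<Sum>i\<in>UNIV. norm (G x $ i))" unfolding norm_vec_def by (rule L2_set_le_sum) simp
  also have "\<dots> \<le> (\<Sum>i\<in>(UNIV::'n set). \<Sum>j\<in>(UNIV::'n set). \<bar>G x $ i $ j\<bar>)"
    by (intro sum_mono norm_le_l1_cart)
  also have "\<dots> \<le> (\<Sum>i\<in>(UNIV::'n set). \<Sum>j\<in>(UNIV::'n set). norm x)"
    by (intro sum_mono c)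
  finally show "norm (G x) \<le> norm x * (real CARD('n) * real CARD('n))" by (simp add: algebra_simps)
qed


lemma G_pow: "G (F M ^ n) = ((\<lambda>X. M ** X) ^^ n) (mat 1)"
  by (induction n) (simp_all add: G_one G_mult G_F)

lemma mexp_G: "mexp M = G (exp (F M))"
proof -
  have "(\<lambda>n. G ((F M)^n /\<^sub>R fact n)) sums G (exp (F M))"
    by (rule bounded_linear.sums[OF G_bl exp_converges])
  moreover have "G ((F M)^n /\<^sub>R fact n) = (1 / fact n) *\<^sub>R (((\<lambda>X. M ** X) ^^ n) (mat 1))" for n
    using linear_scale[OF bounded_linear.linear[OF G_bl], of "inverse (fact n)" "F M ^ n"]
    by (simp add: G_pow divide_inverse)
  ultimately show ?thesis unfolding mexp_def by (simp add: sums_unique[symmetric])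
qed

lemma mexp_inv: "mexp M ** mexp (-M) = mat 1"
  unfolding mexp_G F_uminus G_mult[symmetric] exp_minus_inverse G_one ..

lemma mexp_invertible: "invertible (mexp M)"
  unfolding invertible_def using mexp_inv[of M] mexp_inv[of "-M"] by auto


lemma minv: "invertible (A::real^'n^'n) \<Longrightarrow> A ** matrix_inv A = mat 1 \<and> matrix_inv A ** A = mat 1"
  unfolding invertible_def matrix_inv_def by (rule someI_ex)

lemma inv_of_inj: "(\<And>x. (A::real^'n^'n) *v x = 0 \<Longrightarrow> x = 0) \<Longrightarrow> invertible A"
  using matrix_left_invertible_ker invertible_left_inverse by blast

lemma matrix_sub_ldistrib: "(A::real^'n^'m) ** (B - C) = A ** B - A ** C"
  by (simp add: matrix_matrix_mult_def vec_eq_iff sum_subtractf algebra_simps)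

lemma D_Pi:
  fixes B :: "real^'k^'k" and D :: "real^'k^'m"
  assumes B_pos: "\<forall>x. x \<noteq> 0 \<longrightarrow> x \<bullet> (B *v x) > 0"
    and D_rank: "rank D = CARD('m)"
  shows "D ** proj_Pi B D = 0"
proof -
  have invB: "invertible B"
    by (rule inv_of_inj) (metis B_pos inner_zero_right less_irrefl)
  define Bi where "Bi = matrix_inv B"
  have BBi: "B ** Bi = mat 1" using minv[OF invB] Bi_def by simp
  define S where "S = D ** Bi ** transpose D"
  have injDt: "inj ((*v) (transpose D))"
    using full_rank_injective[of "transpose D"] rank_transpose[of D] D_rank by simp
  have invS: "invertible S"
  proof (rule inv_of_inj, rule ccontr)
    fix x assume Sx: "S *v x = 0" and x0: "x \<noteq> 0"
    define z where "z = transpose D *v x"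
    define w where "w = Bi *v z"
    have z0: "z \<noteq> 0" using injDt x0 unfolding z_def
      by (metis inj_eq matrix_vector_mult_0_right)
    have zw: "z = B *v w" unfolding w_def by (simp add: matrix_vector_mul_assoc BBi)
    have w0: "w \<noteq> 0" using z0 zw by auto
    have "x \<bullet> (S *v x) = z \<bullet> w"
      unfolding S_def z_def w_def
      by (simp add: matrix_vector_mul_assoc[symmetric] dot_lmul_matrix[symmetric])
    also have "\<dots> = w \<bullet> (B *v w)" using zw by (simp add: inner_commute)
    finally have "x \<bullet> (S *v x) > 0" using B_pos w0 by simp
    then show False using Sx by simp
  qed
  have SSi: "S ** matrix_inv S = mat 1" using minv[OF invS] by simp
  have "D ** proj_Pi B D = D - S ** matrix_inv S ** D"
    unfolding proj_Pi_def Bi_def[symmetric]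
    by (simp add: matrix_sub_ldistrib matrix_mul_assoc S_def)
  also have "\<dots> = 0" unfolding SSi by simp
  finally show ?thesis .
qed


lemma mexp_sums: "(\<lambda>n. (1 / fact n) *\<^sub>R (((\<lambda>X. M ** X) ^^ n) (mat 1))) sums mexp M"
proof -
  have "(\<lambda>n. G ((F M)^n /\<^sub>R fact n)) sums G (exp (F M))"
    by (rule bounded_linear.sums[OF G_bl exp_converges])
  moreover have "G ((F M)^n /\<^sub>R fact n) = (1 / fact n) *\<^sub>R (((\<lambda>X. M ** X) ^^ n) (mat 1))" for n
    using linear_scale[OF bounded_linear.linear[OF G_bl], of "inverse (fact n)" "F M ^ n"]
    by (simp add: G_pow divide_inverse)
  ultimately show ?thesis by (simp add: mexp_G)
qed

lemma bl_lmul: "bounded_linear (\<lambda>X::real^'n^'k. (D::real^'k^'m) ** X)"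
proof -
  have "linear (\<lambda>X::real^'n^'k. D ** X)"
    by (rule linearI) (simp_all add: matrix_matrix_mult_def vec_eq_iff sum_distrib_left sum.distrib algebra_simps)
  then show ?thesis by (simp add: linear_conv_bounded_linear)
qed

lemma D_mexp:
  fixes D :: "real^'k^'m" and M :: "real^'k^'k"
  assumes "D ** M = 0" shows "D ** mexp M = D"
proof -
  have s: "(\<lambda>n. D ** ((1 / fact n) *\<^sub>R (((\<lambda>X. M ** X) ^^ n) (mat 1)))) sums (D ** mexp M)"
    by (rule bounded_linear.sums[OF bl_lmul mexp_sums])
  have "D ** ((1 / fact n) *\<^sub>R (((\<lambda>X. M ** X) ^^ n) (mat 1))) = (if n = 0 then D else 0)" for n
  proof (cases n)
    case 0 then show ?thesis by simp
  next
    case (Suc m)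
    have "D ** (((\<lambda>X. M ** X) ^^ n) (mat 1)) = 0"
      using assms by (simp add: Suc matrix_mul_assoc)
    then have "(1 / fact n) *\<^sub>R (D ** (((\<lambda>X. M ** X) ^^ n) (mat 1))) = 0" by simp
    moreover have "D ** ((1 / fact n) *\<^sub>R (((\<lambda>X. M ** X) ^^ n) (mat 1))) = (1 / fact n) *\<^sub>R (D ** (((\<lambda>X. M ** X) ^^ n) (mat 1)))"
      by (rule linear_scale[OF bounded_linear.linear[OF bl_lmul[of D]]])
    ultimately show ?thesis using Suc by simp
  qed
  then have "(\<lambda>n. D ** ((1 / fact n) *\<^sub>R (((\<lambda>X. M ** X) ^^ n) (mat 1)))) sums D"
    using sums_single[of 0 "\<lambda>_. D"] by simp
  then show ?thesis using s sums_unique2 by blast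
qed

lemma D_foldl:
  fixes D :: "real^'k^'m"
  assumes "\<And>g. D ** f g = 0"
  shows "D ** foldl (\<lambda>M g. mexp (f g) ** M) M0 xs = D ** M0 \<and>
         (invertible M0 \<longrightarrow> invertible (foldl (\<lambda>M g. mexp (f g) ** M) M0 xs))"
proof (induction xs arbitrary: M0)
  case Nil then show ?case by simp
next
  case (Cons x xs)
  have "D ** (mexp (f x) ** M0) = D ** M0"
    by (simp add: matrix_mul_assoc D_mexp[OF assms])
  moreover have "invertible M0 \<Longrightarrow> invertible (mexp (f x) ** M0)"
    by (rule invertible_mult[OF mexp_invertible])
  ultimately show ?case using Cons[of "mexp (f x) ** M0"] by simp
qed


theorem mainTheorem4:
  fixes B A :: "real^'k^'k" and D :: "real^'k^'m" and C :: "real^'k \<Rightarrow> real^'k^'k"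
    and h :: real and y :: "real^'k" and s J :: nat
    and a :: "nat \<Rightarrow> nat \<Rightarrow> real" and alpha :: "nat \<Rightarrow> nat \<Rightarrow> nat \<Rightarrow> real"
    and Y :: "nat \<Rightarrow> real^'k"
  assumes B_sym: "transpose B = B"
    and B_pos: "\<forall>x. x \<noteq> 0 \<longrightarrow> x \<bullet> (B *v x) > 0"
    and D_rank: "rank D = CARD('m)"
    and h_pos: "h > 0"
    and y_div: "D *v y = 0"
    and a_last: "a (s+1) (s+1) = 0"
    and stages: "\<forall>i\<in>{1..s+1}.
      Y i = cf_phi h (proj_Pi B D ** matrix_inv B) C
                 (\<lambda>g. \<Sum>kk\<in>{1..s+1}. alpha kk i g *\<^sub>R Y kk) J *v y
          + h *\<^sub>R (\<Sum>j\<in>{1..<i}. a i j *\<^sub>R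
               ((cf_phi h (proj_Pi B D ** matrix_inv B) C
                   (\<lambda>g. \<Sum>kk\<in>{1..s+1}. alpha kk i g *\<^sub>R Y kk) J
                 ** matrix_inv (cf_phi h (proj_Pi B D ** matrix_inv B) C
                   (\<lambda>g. \<Sum>kk\<in>{1..s+1}. alpha kk j g *\<^sub>R Y kk) J)
                 ** proj_Pi B D ** matrix_inv B ** A) *v Y j))
          + (h * a i i) *\<^sub>R ((proj_Pi B D ** matrix_inv B ** A) *v Y i)"
  shows "(\<forall>i\<in>{1..s+1}. D *v Y i = 0) \<and> D *v Y (s+1) = 0"
proof -
  define PB where "PB = proj_Pi B D ** matrix_inv B"
  have DP: "D ** proj_Pi B D = 0" by (rule D_Pi[OF B_pos D_rank])
  have DPB: "D ** PB = 0" unfolding PB_def by (simp add: matrix_mul_assoc DP)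
  have Df: "D ** (h *\<^sub>R (PB ** X)) = 0" for X
    using linear_scale[OF bounded_linear.linear[OF bl_lmul[of D]], of h "PB ** X"]
    by (simp add: matrix_mul_assoc DPB)
  have I1: "invertible (mat 1 :: real^'k^'k)" unfolding invertible_def by auto
  have key: "D ** cf_phi h PB C Z J = D \<and> invertible (cf_phi h PB C Z J)" for Z
    using D_foldl[of D "\<lambda>g. h *\<^sub>R (PB ** C (Z g))", OF Df, of "mat 1" "[1..<J+1]"] I1
    unfolding cf_phi_def by simp
  have key1: "D ** cf_phi h PB C Z J = D" for Z using key by blast
  have key2: "D ** matrix_inv (cf_phi h PB C Z J) = D" for Z
  proof -
    have "D ** matrix_inv (cf_phi h PB C Z J) = (D ** cf_phi h PB C Z J) ** matrix_inv (cf_phi h PB C Z J)"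
      using key1 by simp
    also have "\<dots> = D ** (cf_phi h PB C Z J ** matrix_inv (cf_phi h PB C Z J))"
      by (simp only: matrix_mul_assoc)
    also have "\<dots> = D" using minv[of "cf_phi h PB C Z J"] key by simp
    finally show ?thesis .
  qed
  have lin: "linear ((*v) D)" using bounded_linear.linear[OF bl_mv] .
  have all: "D *v Y i = 0" if i: "i \<in> {1..s+1}" for i
  proof -
    have Yi: "Y i = cf_phi h PB C (\<lambda>g. \<Sum>kk\<in>{1..s+1}. alpha kk i g *\<^sub>R Y kk) J *v y
          + h *\<^sub>R (\<Sum>j\<in>{1..<i}. a i j *\<^sub>R
               ((cf_phi h PB C (\<lambda>g. \<Sum>kk\<in>{1..s+1}. alpha kk i g *\<^sub>R Y kk) J
                 ** matrix_inv (cf_phi h PB C (\<lambda>g. \<Sum>kk\<in>{1..s+1}. alpha kk j g *\<^sub>R Y kk) J)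
                 ** proj_Pi B D ** matrix_inv B ** A) *v Y j))
          + (h * a i i) *\<^sub>R ((proj_Pi B D ** matrix_inv B ** A) *v Y i)"
      using stages i unfolding PB_def by blast
    have t1: "D *v (cf_phi h PB C Z J *v y) = 0" for Z
      by (simp add: matrix_vector_mul_assoc key1 y_div)
    have t2: "D *v ((cf_phi h PB C Z J ** matrix_inv (cf_phi h PB C Z' J)
                 ** proj_Pi B D ** matrix_inv B ** A) *v v) = 0" for Z Z' v
    proof -
      have "D ** (cf_phi h PB C Z J ** matrix_inv (cf_phi h PB C Z' J)
                 ** proj_Pi B D ** matrix_inv B ** A) = 0"
        by (simp add: matrix_mul_assoc key1 key2 DP)
      then show ?thesis by (simp add: matrix_vector_mul_assoc)
    qed
    have t3: "D *v ((proj_Pi B D ** matrix_inv B ** A) *v v) = 0" for v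
      by (simp add: matrix_vector_mul_assoc matrix_mul_assoc DP)
    show ?thesis
      apply (subst Yi)
      apply (simp only: linear_add[OF lin] linear_scale[OF lin] linear_sum[OF lin] t1 t2 t3)
      apply simp
      done
  qed
  then show ?thesis by auto
qed

end
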